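(* Let $r$ be a positive integer. For Lebesgue-almost every $T\in V^+$ with $\operatorname{rank}_+(T)>r$, the problem $\min_{X\in D_r^+}\|T-X\|$ has a unique minimizer, i.e. $T$ has a unique best nonnegative rank-$r$ approximation. (Minimizers exist because $D_r^+$ is closed.)
   Context: For $i=1,\dots,d$, $V_i$ is a real vector space of dimension $n_i$ with a fixed basis; $V_i^+$ is the cone of vectors with nonnegative coordinates in that basis. $V=V_1\otimes\cdots\otimes V_d$ carries the induced basis, so tensors have coordinates $T_{i_1\dots i_d}$; $V^+$ is the set of finite sums $\sum_p u_{1,p}\otimes\cdots\otimes u_{d,p}$ with $u_{i,p}\in V_i^+$ (equivalently, tensors with all coordinates nonnegative), identified with $\mathbb{R}_+^{n_1\cdots n_d}$. The nonnegative rank $\operatorname{rank}_+(T)$ of $T\in V^+$ is the least $r$ such that $T=\sum_{p=1}^r u_{1,p}\otimes\cdots\otimes u_{d,p}$ with all $u_{i,p}\in V_i^+$. $D_r^+=\{X\in V^+:\operatorname{rank}_+(X)\le r\}$. $\|\cdot\|$ is the Hilbert–Schmidt (Euclidean, coordinate $\ell^2$) norm on $V$, with inner product $\langle\cdot,\cdot\rangle$. *)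

theory Defs
  imports "HOL-Probability.Probability"
begin

text \<open>Tensors in V = V_1 \<otimes> ... \<otimes> V_d, dim V_i = n i, are represented by their
coordinates: functions on the multi-index set idx_set d n (extensional, i.e.
elements of PiE (idx_set d n) (\<lambda>_. UNIV)).\<close>

definition idx_set :: "nat \<Rightarrow> (nat \<Rightarrow> nat) \<Rightarrow> (nat \<Rightarrow> nat) set" where
  "idx_set d n = PiE {..<d} (\<lambda>i. {..<n i})"

definition tensor_space :: "nat \<Rightarrow> (nat \<Rightarrow> nat) \<Rightarrow> ((nat \<Rightarrow> nat) \<Rightarrow> real) set" where
  "tensor_space d n = PiE (idx_set d n) (\<lambda>_. UNIV)"

definition nonneg_tensors :: "nat \<Rightarrow> (nat \<Rightarrow> nat) \<Rightarrow> ((nat \<Rightarrow> nat) \<Rightarrow> real) set" where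
  "nonneg_tensors d n = {T \<in> tensor_space d n. \<forall>\<iota>\<in>idx_set d n. T \<iota> \<ge> 0}"

text \<open>T is a sum of r outer products u_{1,p} \<otimes> ... \<otimes> u_{d,p} with nonnegative
vectors u_{i,p} (u p i j is coordinate j of u_{i,p}).\<close>
definition has_nn_decomp :: "nat \<Rightarrow> (nat \<Rightarrow> nat) \<Rightarrow> nat \<Rightarrow> ((nat \<Rightarrow> nat) \<Rightarrow> real) \<Rightarrow> bool" where
  "has_nn_decomp d n r T \<longleftrightarrow>
     (\<exists>u :: nat \<Rightarrow> nat \<Rightarrow> nat \<Rightarrow> real.
        (\<forall>p<r. \<forall>i<d. \<forall>j<n i. u p i j \<ge> 0) \<and>
        T = restrict (\<lambda>\<iota>. \<Sum>p<r. \<Prod>i<d. u p i (\<iota> i)) (idx_set d n))"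

definition nn_rank :: "nat \<Rightarrow> (nat \<Rightarrow> nat) \<Rightarrow> ((nat \<Rightarrow> nat) \<Rightarrow> real) \<Rightarrow> nat" where
  "nn_rank d n T = (LEAST r. has_nn_decomp d n r T)"

definition D_plus :: "nat \<Rightarrow> (nat \<Rightarrow> nat) \<Rightarrow> nat \<Rightarrow> ((nat \<Rightarrow> nat) \<Rightarrow> real) set" where
  "D_plus d n r = {X \<in> nonneg_tensors d n. nn_rank d n X \<le> r}"

definition hs_norm :: "nat \<Rightarrow> (nat \<Rightarrow> nat) \<Rightarrow> ((nat \<Rightarrow> nat) \<Rightarrow> real) \<Rightarrow> real" where
  "hs_norm d n X = sqrt (\<Sum>\<iota>\<in>idx_set d n. (X \<iota>)\<^sup>2)"

definition tensor_lebesgue :: "nat \<Rightarrow> (nat \<Rightarrow> nat) \<Rightarrow> ((nat \<Rightarrow> nat) \<Rightarrow> real) measure" where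
  "tensor_lebesgue d n = PiM (idx_set d n) (\<lambda>_. lborel)"

end

theory Submission
  imports Defs
begin

definition dd :: "'a set \<Rightarrow> ('a \<Rightarrow> real) \<Rightarrow> ('a \<Rightarrow> real) \<Rightarrow> real" where
  "dd I X Y = L2_set (\<lambda>i. X i - Y i) I"

definition rho :: "'a set \<Rightarrow> ('a \<Rightarrow> real) set \<Rightarrow> ('a \<Rightarrow> real) \<Rightarrow> real" where
  "rho I D X = Inf ((\<lambda>Y. dd I X Y) ` D)"

lemma dd_nonneg: "0 \<le> dd I X Y" by (simp add: dd_def)

lemma dd_sym: "dd I X Y = dd I Y X"
  unfolding dd_def L2_set_def by (simp add: power2_commute)

lemma dd_tri: "dd I X Y \<le> dd I X Z + dd I Z Y"
proof -
  have "dd I X Y = L2_set (\<lambda>i. (X i - Z i) + (Z i - Y i)) I" unfolding dd_def by simp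
  also have "\<dots> \<le> dd I X Z + dd I Z Y" unfolding dd_def by (rule L2_set_triangle_ineq)
  finally show ?thesis .
qed

lemma rho_nonneg: "D \<noteq> {} \<Longrightarrow> 0 \<le> rho I D X"
  unfolding rho_def by (rule cInf_greatest) (auto simp: dd_nonneg)

lemma bdd_dd: "bdd_below ((\<lambda>Y. dd I X Y) ` D)"
  by (rule bdd_belowI[of _ 0]) (auto simp: dd_nonneg)

lemma rho_le: "Y \<in> D \<Longrightarrow> rho I D X \<le> dd I X Y"
  unfolding rho_def by (rule cInf_lower) (auto simp: bdd_dd)

lemma rho_tri: assumes "D \<noteq> {}" shows "rho I D X \<le> rho I D Z + dd I X Z"
proof -
  have "rho I D X - dd I X Z \<le> rho I D Z"
    unfolding rho_def[of I D Z]
  proof (rule cInf_greatest)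
    show "(\<lambda>Y. dd I Z Y) ` D \<noteq> {}" using assms by auto
    fix y assume "y \<in> (\<lambda>Y. dd I Z Y) ` D"
    then obtain Y where Y: "Y \<in> D" "y = dd I Z Y" by auto
    have "rho I D X \<le> dd I X Y" using rho_le[OF Y(1)] .
    also have "\<dots> \<le> dd I X Z + dd I Z Y" by (rule dd_tri)
    finally show "rho I D X - dd I X Z \<le> y" using Y by simp
  qed
  then show ?thesis by simp
qed

lemma rho_lip: assumes "D \<noteq> {}" shows "\<bar>rho I D X - rho I D Z\<bar> \<le> dd I X Z"
  using rho_tri[OF assms, of I X Z] rho_tri[OF assms, of I Z X] dd_sym[of I X Z] by linarith

lemma rho_eq_min: assumes "Y \<in> D" "\<forall>Y'\<in>D. dd I X Y \<le> dd I X Y'"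
  shows "rho I D X = dd I X Y"
proof (rule antisym)
  show "rho I D X \<le> dd I X Y" using rho_le[OF assms(1)] .
  show "dd I X Y \<le> rho I D X" unfolding rho_def
    by (rule cInf_greatest) (use assms in auto)
qed

lemma dd_sq: "finite I \<Longrightarrow> (dd I X Y)^2 = (\<Sum>i\<in>I. (X i - Y i)^2)"
  unfolding dd_def L2_set_def by (simp add: sum_nonneg)

lemma dd_shift_sq:
  assumes "finite I" "k \<in> I"
  shows "(dd I (X(k := X k + t)) Y)^2 = (dd I X Y)^2 + 2*t*(X k - Y k) + t^2"
proof -
  have "(dd I (X(k := X k + t)) Y)^2 = (X k + t - Y k)^2 + (\<Sum>i\<in>I-{k}. (X i - Y i)^2)"
    unfolding dd_sq[OF assms(1)] using assms
    by (simp add: sum.remove[of I k]; intro sum.cong; auto)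
  moreover have "(dd I X Y)^2 = (X k - Y k)^2 + (\<Sum>i\<in>I-{k}. (X i - Y i)^2)"
    unfolding dd_sq[OF assms(1)] using assms by (simp add: sum.remove[of I k])
  ultimately show ?thesis by (simp add: power2_eq_square algebra_simps)
qed

lemma dd_shift_shift:
  assumes "finite I" "k \<in> I"
  shows "dd I (X(k := X k + t)) (X(k := X k + s)) = \<bar>t - s\<bar>"
proof -
  have "(dd I (X(k := X k + t)) (X(k := X k + s)))^2 = (t - s)^2"
    unfolding dd_sq[OF assms(1)] using assms
    by (simp add: sum.remove[of I k]; intro sum.neutral; auto)
  then show ?thesis using dd_nonneg
    by (metis power2_abs real_sqrt_abs real_sqrt_unique)
qed

definition Psi :: "'a set \<Rightarrow> ('a \<Rightarrow> real) set \<Rightarrow> 'a \<Rightarrow> real \<Rightarrow> ('a \<Rightarrow> real) \<Rightarrow> real \<Rightarrow> real" where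
  "Psi I D k q X t = (rho I D (X(k := X k + t)))^2 - (rho I D X)^2 - t^2 - 2*t*(X k - q)"

definition Cset where
  "Cset I D k q e = {X \<in> PiE I (\<lambda>_. UNIV). \<forall>t. Psi I D k q X t \<le> - 2*e*\<bar>t\<bar>}"

lemma bad_in_C:
  assumes fin: "finite I" and k: "k \<in> I" and X1: "X1 \<in> D" and X2: "X2 \<in> D"
    and m1: "\<forall>Y\<in>D. dd I T X1 \<le> dd I T Y" and m2: "\<forall>Y\<in>D. dd I T X2 \<le> dd I T Y"
    and q1: "X1 k + e \<le> q" and q2: "q \<le> X2 k - e"
  shows "Psi I D k q T t \<le> - 2*e*\<bar>t\<bar>"
proof -
  have D: "D \<noteq> {}" using X1 by auto
  have r1: "rho I D T = dd I T X1" by (rule rho_eq_min[OF X1 m1])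
  have r2: "rho I D T = dd I T X2" by (rule rho_eq_min[OF X2 m2])
  have le: "(rho I D (T(k := T k + t)))^2 \<le> (dd I T Y)^2 + 2*t*(T k - Y k) + t^2" if "Y \<in> D" for Y
  proof -
    have "(rho I D (T(k := T k + t)))^2 \<le> (dd I (T(k := T k + t)) Y)^2"
      by (rule power_mono[OF rho_le[OF that] rho_nonneg[OF D]])
    then show ?thesis using dd_shift_sq[OF fin k] by simp
  qed
  show ?thesis
  proof (cases "t \<ge> 0")
    case True
    have "Psi I D k q T t \<le> 2*t*(q - X2 k)"
      using le[OF X2] r2 unfolding Psi_def by (simp add: algebra_simps)
    also have "\<dots> \<le> -2*e*\<bar>t\<bar>" using True q2 mult_left_mono[of "q + e" "X2 k" t]
      by (simp add: algebra_simps)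
    finally show ?thesis .
  next
    case False
    have "Psi I D k q T t \<le> 2*t*(q - X1 k)"
      using le[OF X1] r1 unfolding Psi_def by (simp add: algebra_simps)
    also have "\<dots> \<le> -2*e*\<bar>t\<bar>" using False q1 mult_left_mono_neg[of "X1 k + e" q t]
      by (simp add: algebra_simps)
    finally show ?thesis .
  qed
qed

lemma C_line:
  assumes "e > 0" "x(k := y1) \<in> Cset I D k q e" "x(k := y2) \<in> Cset I D k q e"
  shows "y1 = y2"
proof (rule ccontr)
  assume ne: "y1 \<noteq> y2"
  let ?T1 = "x(k := y1)" and ?T2 = "x(k := y2)"
  have a: "?T1(k := ?T1 k + (y2 - y1)) = ?T2" by simp
  have b: "?T2(k := ?T2 k + (y1 - y2)) = ?T1" by simp
  have 1: "Psi I D k q ?T1 (y2 - y1) \<le> -2*e*\<bar>y2 - y1\<bar>" using assms(2) unfolding Cset_def by auto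
  have 2: "Psi I D k q ?T2 (y1 - y2) \<le> -2*e*\<bar>y1 - y2\<bar>" using assms(3) unfolding Cset_def by auto
  have "Psi I D k q ?T1 (y2 - y1) + Psi I D k q ?T2 (y1 - y2) = 0"
    unfolding Psi_def a b by (simp add: power2_eq_square algebra_simps)
  moreover have "e * \<bar>y2 - y1\<bar> > 0" using ne assms(1) by simp
  ultimately show False using 1 2 by (simp add: abs_minus_commute)
qed

lemma Psi_cont:
  assumes fin: "finite I" and k: "k \<in> I" and D: "D \<noteq> {}"
  shows "continuous_on UNIV (Psi I D k q X)"
proof -
  have "1-lipschitz_on UNIV (\<lambda>t. rho I D (X(k := X k + t)))"
  proof (rule lipschitz_onI)
    fix t s :: real
    show "dist (rho I D (X(k := X k + t))) (rho I D (X(k := X k + s))) \<le> 1 * dist t s"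
      using rho_lip[OF D, of I "X(k := X k + t)" "X(k := X k + s)"] dd_shift_shift[OF fin k]
      by (simp add: dist_real_def)
  qed simp
  then have c: "continuous_on UNIV (\<lambda>t. rho I D (X(k := X k + t)))"
    by (rule lipschitz_on_continuous_on)
  show ?thesis unfolding Psi_def[abs_def]
    by (intro continuous_intros c)
qed

lemma C_rat:
  assumes fin: "finite I" and k: "k \<in> I" and D: "D \<noteq> {}"
  shows "Cset I D k q e = {X \<in> PiE I (\<lambda>_. UNIV). \<forall>t::rat. Psi I D k q X (of_rat t) \<le> - 2*e*\<bar>of_rat t\<bar>}"
proof -
  have "(\<forall>t. Psi I D k q X t \<le> - 2*e*\<bar>t\<bar>) \<longleftrightarrow> (\<forall>t::rat. Psi I D k q X (of_rat t) \<le> - 2*e*\<bar>of_rat t\<bar>)" for X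
  proof
    assume H: "\<forall>t::rat. Psi I D k q X (of_rat t) \<le> - 2*e*\<bar>of_rat t\<bar>"
    have cl: "closed {t. Psi I D k q X t \<le> - 2*e*\<bar>t\<bar>}"
      by (rule closed_Collect_le[OF Psi_cont[OF fin k D]]) (intro continuous_intros)
    have "\<rat> \<subseteq> {t. Psi I D k q X t \<le> - 2*e*\<bar>t\<bar>}"
      using H by (auto elim!: Rats_cases)
    then have "closure \<rat> \<subseteq> {t. Psi I D k q X t \<le> - 2*e*\<bar>t\<bar>}"
      by (rule closure_minimal[OF _ cl])
    then show "\<forall>t. Psi I D k q X t \<le> - 2*e*\<bar>t\<bar>" by (auto simp: Rats_closure_real)
  qed (metis abs_of_rat)
  then show ?thesis unfolding Cset_def by auto
qed

lemma approx_rat: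
  assumes fin: "finite I" and e: "e > 0"
  shows "\<exists>Z\<in>PiE I (\<lambda>_. \<rat>). dd I X Z < e"
proof -
  define e' where "e' = e / (real (card I) + 1)"
  have e': "e' > 0" using e by (simp add: e'_def)
  have "\<forall>i. \<exists>r. r \<in> \<rat> \<and> X i - e' < r \<and> r < X i + e'"
  proof
    fix i show "\<exists>r. r \<in> \<rat> \<and> X i - e' < r \<and> r < X i + e'"
      using Rats_dense_in_real[of "X i - e'" "X i + e'"] e' by auto
  qed
  then obtain z where z: "\<And>i. z i \<in> \<rat>" "\<And>i. X i - e' < z i" "\<And>i. z i < X i + e'"
    by metis
  have "dd I X (restrict z I) \<le> (\<Sum>i\<in>I. \<bar>X i - restrict z I i\<bar>)"
    unfolding dd_def by (rule L2_set_le_sum_abs)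
  also have "\<dots> \<le> (\<Sum>i\<in>I. e')"
  proof (intro sum_mono)
    fix i assume "i \<in> I" then show "\<bar>X i - restrict z I i\<bar> \<le> e'" using z(2)[of i] z(3)[of i]
      by (auto simp: abs_le_iff)
  qed
  also have "\<dots> = real (card I) * e'" by simp
  also have "\<dots> < e" unfolding e'_def using e
    by (simp add: field_simps)
  finally show ?thesis using z by (intro bexI[of _ "restrict z I"]) auto
qed

lemma rho_INF:
  assumes fin: "finite I" and D: "D \<noteq> {}"
  shows "rho I D X = (INF Z\<in>PiE I (\<lambda>_. \<rat>). rho I D Z + dd I X Z)"
proof (rule antisym)
  have ne: "PiE I (\<lambda>_. \<rat>) \<noteq> {}" by (simp add: PiE_eq_empty_iff) (use Rats_0 in blast)
  show "rho I D X \<le> (INF Z\<in>PiE I (\<lambda>_. \<rat>). rho I D Z + dd I X Z)"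
    by (rule cINF_greatest[OF ne]) (rule rho_tri[OF D])
  have bdd: "bdd_below ((\<lambda>Z. rho I D Z + dd I X Z) ` PiE I (\<lambda>_. \<rat>))"
    by (rule bdd_belowI[of _ 0]) (auto intro!: add_nonneg_nonneg rho_nonneg[OF D] dd_nonneg)
  show "(INF Z\<in>PiE I (\<lambda>_. \<rat>). rho I D Z + dd I X Z) \<le> rho I D X"
  proof (rule field_le_epsilon)
    fix e :: real assume e: "e > 0"
    obtain Z where Z: "Z \<in> PiE I (\<lambda>_. \<rat>)" "dd I X Z < e/2"
      using approx_rat[OF fin, of "e/2" X] e by auto
    have "(INF Z\<in>PiE I (\<lambda>_. \<rat>). rho I D Z + dd I X Z) \<le> rho I D Z + dd I X Z"
      by (rule cINF_lower[OF bdd Z(1)])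
    also have "\<dots> \<le> rho I D X + dd I Z X + dd I X Z" using rho_tri[OF D, of I Z X] by simp
    also have "\<dots> \<le> rho I D X + e" using Z(2) dd_sym[of I Z X] by simp
    finally show "(INF Z\<in>PiE I (\<lambda>_. \<rat>). rho I D Z + dd I X Z) \<le> rho I D X + e" .
  qed
qed

lemma rho_meas:
  assumes fin: "finite I" and D: "D \<noteq> {}"
    and F: "\<And>i. i \<in> I \<Longrightarrow> (\<lambda>x. F x i) \<in> borel_measurable M"
  shows "(\<lambda>x. rho I D (F x)) \<in> borel_measurable M"
proof -
  have "(\<lambda>x. rho I D (F x)) = (\<lambda>x. INF Z\<in>PiE I (\<lambda>_. \<rat>). rho I D Z + dd I (F x) Z)"
    by (subst rho_INF[OF fin D]) (rule refl)
  also have "\<dots> \<in> borel_measurable M"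
  proof (rule borel_measurable_cINF_real)
    show "countable (PiE I (\<lambda>_. \<rat>))" by (rule countable_PiE[OF fin]) (rule countable_rat)
    fix Z
    have "(\<lambda>x. \<Sum>i\<in>I. (F x i - Z i)\<^sup>2) \<in> borel_measurable M"
      by (rule borel_measurable_sum) (use F in measurable)
    then show "(\<lambda>x. rho I D Z + dd I (F x) Z) \<in> borel_measurable M"
      unfolding dd_def L2_set_def by measurable
  qed
  finally show ?thesis .
qed

lemma C_sets:
  assumes fin: "finite I" and k: "k \<in> I" and D: "D \<noteq> {}"
  shows "Cset I D k q e \<in> sets (PiM I (\<lambda>_. lborel))"
proof -
  let ?M = "PiM I (\<lambda>_. lborel)"
  have coord: "(\<lambda>x. x i) \<in> borel_measurable ?M" if "i \<in> I" for i
    using measurable_component_singleton[OF that, of "\<lambda>_. lborel"] by simp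
  have m: "(\<lambda>X. Psi I D k q X t) \<in> borel_measurable ?M" for t
  proof -
    have a: "(\<lambda>X. rho I D (X(k := X k + t))) \<in> borel_measurable ?M"
      by (rule rho_meas[OF fin D]) (use coord k in auto)
    have b: "(\<lambda>X. rho I D X) \<in> borel_measurable ?M"
      using rho_meas[OF fin D, where M="?M" and F="\<lambda>X. X"] coord by auto
    show ?thesis unfolding Psi_def using a b coord[OF k] by measurable
  qed
  have "Measurable.pred ?M (\<lambda>X. \<forall>t::rat. Psi I D k q X (of_rat t) \<le> - 2*e*\<bar>of_rat t\<bar>)"
    using m by measurable
  then have "{X \<in> space ?M. \<forall>t::rat. Psi I D k q X (of_rat t) \<le> - 2*e*\<bar>of_rat t\<bar>} \<in> sets ?M"
    by (simp add: pred_def)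
  then show ?thesis unfolding C_rat[OF fin k D] by (simp add: space_PiM)
qed

lemma C_null:
  assumes fin: "finite I" and k: "k \<in> I" and D: "D \<noteq> {}" and e: "e > 0"
  shows "Cset I D k q e \<in> null_sets (PiM I (\<lambda>_. lborel))"
proof -
  interpret product_sigma_finite "\<lambda>_. lborel" by standard
  define J where "J = I - {k}"
  have IJ: "I = insert k J" "k \<notin> J" "finite J" using k fin by (auto simp: J_def)
  let ?C = "Cset I D k q e"
  have Cs: "?C \<in> sets (PiM I (\<lambda>_. lborel))" by (rule C_sets[OF fin k D])
  have inner: "(\<integral>\<^sup>+ y. indicator ?C (x(k := y)) \<partial>lborel) = 0" for x
  proof -
    have cnt: "countable {y. x(k := y) \<in> ?C}"
    proof (cases "{y. x(k := y) \<in> ?C} = {}")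
      case False
      then obtain y0 where y0: "x(k := y0) \<in> ?C" by auto
      have "{y. x(k := y) \<in> ?C} \<subseteq> {y0}"
      proof
        fix y assume "y \<in> {y. x(k := y) \<in> ?C}"
        then show "y \<in> {y0}" using C_line[OF e y0, of y] by auto
      qed
      then show ?thesis using countable_subset by blast
    qed simp
    have "AE y in lborel. y \<notin> {y. x(k := y) \<in> ?C}"
      by (rule AE_not_in[OF countable_imp_null_set_lborel[OF cnt]])
    then have "AE y in lborel. indicator ?C (x(k := y)) = (0::ennreal)"
      by eventually_elim (simp add: indicator_def)
    then have "(\<integral>\<^sup>+ y. indicator ?C (x(k := y)) \<partial>lborel) = (\<integral>\<^sup>+ (y::real). 0 \<partial>lborel)"
      by (rule nn_integral_cong_AE)
    then show ?thesis by simp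
  qed
  have "emeasure (PiM I (\<lambda>_. lborel)) ?C = (\<integral>\<^sup>+ x. indicator ?C x \<partial>PiM I (\<lambda>_. lborel))"
    using Cs by simp
  also have "\<dots> = (\<integral>\<^sup>+ x. (\<integral>\<^sup>+ y. indicator ?C (x(k := y)) \<partial>lborel) \<partial>PiM J (\<lambda>_. lborel))"
    unfolding IJ(1) by (rule product_nn_integral_insert) (use IJ Cs in auto)
  also have "\<dots> = 0" by (simp add: inner)
  finally show ?thesis using Cs by auto
qed

lemma uniq_AE:
  assumes fin: "finite I" and D: "D \<noteq> {}"
  shows "AE T in PiM I (\<lambda>_. lborel). \<forall>X1\<in>D. \<forall>X2\<in>D.
     (\<forall>Y\<in>D. dd I T X1 \<le> dd I T Y) \<longrightarrow> (\<forall>Y\<in>D. dd I T X2 \<le> dd I T Y) \<longrightarrow> (\<forall>i\<in>I. X1 i = X2 i)"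
proof -
  let ?M = "PiM I (\<lambda>_. lborel)"
  let ?E = "{e::real. e \<in> \<rat> \<and> e > 0}"
  have cE: "countable ?E" by (rule countable_subset[OF _ countable_rat]) auto
  have "AE T in ?M. \<forall>k\<in>I. \<forall>q\<in>\<rat>. \<forall>e\<in>?E. T \<notin> Cset I D k q e"
    apply (subst AE_ball_countable, rule countable_finite[OF fin], intro ballI)
    apply (subst AE_ball_countable, rule countable_rat, intro ballI)
    apply (subst AE_ball_countable[OF cE], intro ballI)
    apply (rule AE_not_in, rule C_null[OF fin _ D])
    by auto
  then show ?thesis
  proof (rule AE_mp, intro AE_I2 impI ballI)
    fix T X1 X2 i
    assume T: "T \<in> space ?M" and H: "\<forall>k\<in>I. \<forall>q\<in>\<rat>. \<forall>e\<in>?E. T \<notin> Cset I D k q e"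
      and X: "X1 \<in> D" "X2 \<in> D" "\<forall>Y\<in>D. dd I T X1 \<le> dd I T Y" "\<forall>Y\<in>D. dd I T X2 \<le> dd I T Y"
      and i: "i \<in> I"
    have T': "T \<in> PiE I (\<lambda>_. UNIV)" using T by (simp add: space_PiM)
    have main: False if AB: "A \<in> D" "B \<in> D" "\<forall>Y\<in>D. dd I T A \<le> dd I T Y" "\<forall>Y\<in>D. dd I T B \<le> dd I T Y"
        "A i < B i" for A B
    proof -
      obtain q where q: "q \<in> \<rat>" "A i < q" "q < B i" using Rats_dense_in_real AB(5) by blast
      obtain e where e: "e \<in> \<rat>" "0 < e" "e < min (q - A i) (B i - q)"
        using Rats_dense_in_real[of 0 "min (q - A i) (B i - q)"] q by auto
      have "T \<in> Cset I D i q e" unfolding Cset_def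
        using T' bad_in_C[OF fin i AB(1,2,3,4), of e q] e by auto
      then show False using H i q e by auto
    qed
    show "X1 i = X2 i"
      using main[OF X(1,2,3,4)] main[OF X(2,1,4,3)] by (metis linorder_neq_iff)
  qed
qed

lemma finite_idx: "finite (idx_set d n)"
  unfolding idx_set_def by (rule finite_PiE) auto

lemma decomp_exists:
  assumes d: "d \<ge> 1" and X: "X \<in> nonneg_tensors d n"
  shows "\<exists>k. has_nn_decomp d n k X"
proof -
  let ?I = "idx_set d n"
  obtain f where f: "bij_betw f {0..<card ?I} ?I" using ex_bij_betw_nat_finite[OF finite_idx] by blast
  have XI: "X \<in> PiE ?I (\<lambda>_. UNIV)" and Xnn: "\<And>\<iota>. \<iota> \<in> ?I \<Longrightarrow> X \<iota> \<ge> 0"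
    using X by (auto simp: nonneg_tensors_def tensor_space_def)
  define u where "u p i j = (if j = f p i then (if i = 0 then X (f p) else 1) else 0)" for p i j
  have fI: "f p \<in> ?I" if "p < card ?I" for p using f that by (auto simp: bij_betw_def)
  have nn: "\<forall>p<card ?I. \<forall>i<d. \<forall>j<n i. u p i j \<ge> 0"
    using fI Xnn by (auto simp: u_def)
  have prodeq: "(\<Prod>i<d. u p i (\<iota> i)) = (if \<iota> = f p then X (f p) else 0)"
    if p: "p < card ?I" and \<iota>: "\<iota> \<in> ?I" for p \<iota>
  proof (cases "\<iota> = f p")
    case True
    have "(\<Prod>i<d. u p i (\<iota> i)) = (\<Prod>i<d. if i = 0 then X (f p) else 1)"
      by (rule prod.cong) (auto simp: u_def True)
    also have "\<dots> = X (f p)" using d by (simp add: prod.delta)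
    finally show ?thesis using True by simp
  next
    case False
    have "\<exists>i<d. \<iota> i \<noteq> f p i"
    proof (rule ccontr)
      assume "\<not> ?thesis"
      then have "\<iota> = f p" using \<iota> fI[OF p] unfolding idx_set_def
        by (intro PiE_ext) auto
      then show False using False by simp
    qed
    then obtain i where "i < d" "\<iota> i \<noteq> f p i" by blast
    then have "(\<Prod>i<d. u p i (\<iota> i)) = 0"
      by (intro prod_zero) (auto simp: u_def intro!: bexI[of _ i])
    then show ?thesis using False by simp
  qed
  have "X \<iota> = (\<Sum>p<card ?I. \<Prod>i<d. u p i (\<iota> i))" if \<iota>: "\<iota> \<in> ?I" for \<iota>
  proof -
    have "(\<Sum>p<card ?I. \<Prod>i<d. u p i (\<iota> i)) = (\<Sum>p\<in>{0..<card ?I}. (\<lambda>\<iota>'. if \<iota> = \<iota>' then X \<iota>' else 0) (f p))"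
      using prodeq \<iota> by (auto simp: atLeast0LessThan intro!: sum.cong)
    also have "\<dots> = (\<Sum>\<iota>'\<in>?I. if \<iota> = \<iota>' then X \<iota>' else 0)"
      by (rule sum.reindex_bij_betw[OF f])
    also have "\<dots> = X \<iota>" using \<iota> finite_idx by simp
    finally show ?thesis by simp
  qed
  then have "X = restrict (\<lambda>\<iota>. \<Sum>p<card ?I. \<Prod>i<d. u p i (\<iota> i)) ?I"
    by (intro PiE_ext[OF XI]) auto
  then show ?thesis unfolding has_nn_decomp_def using nn by blast
qed

lemma idx_mem: "\<iota> \<in> idx_set d n \<Longrightarrow> i < d \<Longrightarrow> \<iota> i < n i"
  unfolding idx_set_def by auto

lemma normalize_term:
  assumes d: "d \<ge> 1" and B: "B \<ge> 0"
    and a_nn: "\<forall>i<d. \<forall>j<n i. a i j \<ge> 0"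
    and bound: "\<forall>\<iota>\<in>idx_set d n. (\<Prod>i<d. a i (\<iota> i)) \<le> B"
  shows "\<exists>b. (\<forall>i j. 0 \<le> b i j \<and> b i j \<le> root d B) \<and>
             (\<forall>\<iota>\<in>idx_set d n. (\<Prod>i<d. b i (\<iota> i)) = (\<Prod>i<d. a i (\<iota> i)))"
proof (cases "\<exists>i<d. \<forall>j<n i. a i j = 0")
  case True
  then obtain i0 where i0: "i0 < d" "\<forall>j<n i0. a i0 j = 0" by blast
  have z: "(\<Prod>i<d. a i (\<iota> i)) = 0" if "\<iota> \<in> idx_set d n" for \<iota>
    using i0 idx_mem[OF that i0(1)] by (intro prod_zero) (auto intro!: bexI[of _ i0])
  have z2: "(\<Prod>i<d. (0::real)) = 0" using d by simp
  show ?thesis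
    apply (intro exI[of _ "\<lambda>_ _. 0"] conjI allI ballI)
    subgoal by simp
    subgoal using B by (simp add: real_root_ge_zero)
    subgoal for \<iota> using z z2 by metis
    done
next
  case False
  have pos: "\<forall>i<d. \<exists>j<n i. a i j > 0"
  proof (intro allI impI)
    fix i assume i: "i < d"
    then obtain j where "j < n i" "a i j \<noteq> 0" using False by blast
    then show "\<exists>j<n i. a i j > 0" using a_nn i by (intro exI[of _ j]) force
  qed
  define m where "m i = Max (a i ` {..<n i})" for i
  have mge: "a i j \<le> m i" if "i < d" "j < n i" for i j
    unfolding m_def using that by (intro Max_ge) auto
  have "\<forall>i. \<exists>j. i < d \<longrightarrow> j < n i \<and> a i j = m i"
  proof
    fix i show "\<exists>j. i < d \<longrightarrow> j < n i \<and> a i j = m i"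
    proof (cases "i < d")
      case True
      then have ne: "{..<n i} \<noteq> {}" using pos by auto
      have "m i \<in> a i ` {..<n i}" unfolding m_def using ne by (intro Max_in) auto
      then show ?thesis by auto
    qed auto
  qed
  then obtain js where js: "\<And>i. i < d \<Longrightarrow> js i < n i \<and> a i (js i) = m i" by metis
  have mpos: "m i > 0" if "i < d" for i
    using pos that mge by (meson less_le_trans)
  define P where "P = (\<Prod>i<d. m i)"
  have Ppos: "P > 0" unfolding P_def using mpos by (intro prod_pos) auto
  have "restrict js {..<d} \<in> idx_set d n" unfolding idx_set_def using js by auto
  then have "(\<Prod>i<d. a i (restrict js {..<d} i)) \<le> B" using bound by blast
  moreover have "(\<Prod>i<d. a i (restrict js {..<d} i)) = P" unfolding P_def
    using js by (intro prod.cong) auto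
  ultimately have PB: "P \<le> B" by simp
  define c where "c = root d P"
  have c0: "c \<ge> 0" unfolding c_def using Ppos by (simp add: real_root_ge_zero)
  have cd: "c ^ d = P" unfolding c_def using Ppos d by (simp add: real_root_pow_pos2)
  have cB: "c \<le> root d B" unfolding c_def using PB d by (simp add: real_root_le_iff)
  define b where "b i j = (if i < d \<and> j < n i then a i j * (c / m i) else 0)" for i j
  have b1: "0 \<le> b i j \<and> b i j \<le> root d B" for i j
  proof (cases "i < d \<and> j < n i")
    case True
    have "a i j * (c / m i) \<le> m i * (c / m i)"
      using True mge a_nn c0 mpos[of i] by (intro mult_right_mono) auto
    also have "\<dots> = c" using mpos[of i] True by simp
    finally show ?thesis using True a_nn c0 mpos[of i] cB unfolding b_def by auto
  next
    case False then show ?thesis using B unfolding b_def by (auto simp: real_root_ge_zero)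
  qed
  have b2: "(\<Prod>i<d. b i (\<iota> i)) = (\<Prod>i<d. a i (\<iota> i))" if \<iota>: "\<iota> \<in> idx_set d n" for \<iota>
  proof -
    have "(\<Prod>i<d. b i (\<iota> i)) = (\<Prod>i<d. a i (\<iota> i) * (c / m i))"
      unfolding b_def using idx_mem[OF \<iota>] by (intro prod.cong) auto
    also have "\<dots> = (\<Prod>i<d. a i (\<iota> i)) * (\<Prod>i<d. c / m i)" by (rule prod.distrib)
    also have "(\<Prod>i<d. c / m i) = c ^ d / P" unfolding P_def by (simp add: prod_dividef)
    also have "\<dots> = 1" using cd Ppos by simp
    finally show ?thesis by simp
  qed
  show ?thesis using b1 b2 by blast
qed

definition tens :: "nat \<Rightarrow> (nat \<Rightarrow> nat) \<Rightarrow> nat \<Rightarrow> (nat \<times> nat \<times> nat \<Rightarrow> real) \<Rightarrow> ((nat \<Rightarrow> nat) \<Rightarrow> real)" where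
  "tens d n r v = restrict (\<lambda>\<iota>. \<Sum>p<r. \<Prod>i<d. v (p, i, \<iota> i)) (idx_set d n)"

lemma tens_in_D:
  assumes "\<And>x. v x \<ge> 0"
  shows "tens d n r v \<in> D_plus d n r"
proof -
  have "has_nn_decomp d n r (tens d n r v)"
    unfolding has_nn_decomp_def tens_def using assms
    by (intro exI[of _ "\<lambda>p i j. v (p, i, j)"]) auto
  then have "nn_rank d n (tens d n r v) \<le> r" unfolding nn_rank_def by (rule Least_le)
  moreover have "tens d n r v \<in> nonneg_tensors d n"
    unfolding nonneg_tensors_def tensor_space_def tens_def using assms
    by (auto intro!: sum_nonneg prod_nonneg)
  ultimately show ?thesis unfolding D_plus_def by auto
qed

lemma D_decomp:
  assumes d: "d \<ge> 1" and Y: "Y \<in> D_plus d n r" and B: "B \<ge> 0"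
    and YB: "\<forall>\<iota>\<in>idx_set d n. Y \<iota> \<le> B"
  shows "\<exists>v. (\<forall>x. 0 \<le> v x \<and> v x \<le> root d B) \<and> Y = tens d n r v"
proof -
  have Ynn: "Y \<in> nonneg_tensors d n" and Yr: "nn_rank d n Y \<le> r" using Y by (auto simp: D_plus_def)
  have YI: "Y \<in> PiE (idx_set d n) (\<lambda>_. UNIV)" using Ynn by (simp add: nonneg_tensors_def tensor_space_def)
  define k where "k = nn_rank d n Y"
  have "has_nn_decomp d n k Y" unfolding k_def nn_rank_def
    using decomp_exists[OF d Ynn] by (rule LeastI_ex)
  then obtain u where u_nn: "\<forall>p<k. \<forall>i<d. \<forall>j<n i. u p i j \<ge> 0"
    and Yu: "Y = restrict (\<lambda>\<iota>. \<Sum>p<k. \<Prod>i<d. u p i (\<iota> i)) (idx_set d n)"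
    unfolding has_nn_decomp_def by blast
  have kr: "k \<le> r" using Yr k_def by simp
  define a where "a p = (if p < k then u p else (\<lambda>i j. 0))" for p
  have a_nn: "\<forall>i<d. \<forall>j<n i. a p i j \<ge> 0" for p using u_nn by (auto simp: a_def)
  have Yval: "Y \<iota> = (\<Sum>p<k. \<Prod>i<d. u p i (\<iota> i))" if "\<iota> \<in> idx_set d n" for \<iota>
    using that by (subst Yu) simp
  have termle: "(\<Prod>i<d. a p i (\<iota> i)) \<le> B" if \<iota>: "\<iota> \<in> idx_set d n" for p \<iota>
  proof (cases "p < k")
    case True
    have "(\<Prod>i<d. a p i (\<iota> i)) = (\<Prod>i<d. u p i (\<iota> i))" using True by (simp add: a_def)
    also have "\<dots> \<le> (\<Sum>p<k. \<Prod>i<d. u p i (\<iota> i))"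
      using True u_nn idx_mem[OF \<iota>] by (intro member_le_sum prod_nonneg) auto
    also have "\<dots> \<le> B" using Yval[OF \<iota>] YB \<iota> by metis
    finally show ?thesis .
  next
    case False
    have "(\<Prod>i<d. a p i (\<iota> i)) = 0" using False d by (simp add: a_def)
    then show ?thesis using B by linarith
  qed
  have "\<forall>p. \<exists>b. (\<forall>i j. 0 \<le> b i j \<and> b i j \<le> root d B) \<and>
             (\<forall>\<iota>\<in>idx_set d n. (\<Prod>i<d. b i (\<iota> i)) = (\<Prod>i<d. a p i (\<iota> i)))"
  proof
    fix p show "\<exists>b. (\<forall>i j. 0 \<le> b i j \<and> b i j \<le> root d B) \<and>
             (\<forall>\<iota>\<in>idx_set d n. (\<Prod>i<d. b i (\<iota> i)) = (\<Prod>i<d. a p i (\<iota> i)))"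
      using normalize_term[OF d B a_nn] termle by blast
  qed
  then obtain bb where bb: "\<And>p i j. 0 \<le> bb p i j \<and> bb p i j \<le> root d B"
    "\<And>p \<iota>. \<iota> \<in> idx_set d n \<Longrightarrow> (\<Prod>i<d. bb p i (\<iota> i)) = (\<Prod>i<d. a p i (\<iota> i))"
    by metis
  define v where "v x = (case x of (p, i, j) \<Rightarrow> bb p i j)" for x
  have v1: "0 \<le> v x \<and> v x \<le> root d B" for x using bb(1) by (cases x) (auto simp: v_def)
  have "Y \<iota> = tens d n r v \<iota>" if \<iota>: "\<iota> \<in> idx_set d n" for \<iota>
  proof -
    have "tens d n r v \<iota> = (\<Sum>p<r. \<Prod>i<d. a p i (\<iota> i))"
      unfolding tens_def using \<iota> bb(2)[OF \<iota>] by (simp add: v_def)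
    also have "\<dots> = (\<Sum>p<k. \<Prod>i<d. a p i (\<iota> i))"
      using kr d by (intro sum.mono_neutral_right) (auto simp: a_def)
    also have "\<dots> = Y \<iota>" using Yval[OF \<iota>] by (simp add: a_def)
    finally show ?thesis by simp
  qed
  then have "Y = tens d n r v"
    by (intro PiE_ext[OF YI]) (auto simp: tens_def)
  then show ?thesis using v1 by blast
qed

lemma compact_PiE_UNIV:
  fixes S :: "'a \<Rightarrow> 'b::topological_space set"
  assumes "\<And>i. compact (S i)"
  shows "compact (PiE UNIV S)"
proof -
  have "compactin (product_topology (\<lambda>_. euclidean) UNIV) (PiE UNIV S)"
    using assms by (simp add: compactin_PiE)
  then show ?thesis by (simp add: euclidean_product_topology)
qed

lemma continuous_on_coord [continuous_intros]:
  "continuous_on S (\<lambda>v. v x :: 'b::topological_space)"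
  by (rule continuous_on_subset[OF continuous_on_product_coordinates]) simp

lemma exists_min:
  assumes d: "d \<ge> 1"
  shows "\<exists>X\<in>D_plus d n r. \<forall>Y\<in>D_plus d n r. dd (idx_set d n) T X \<le> dd (idx_set d n) T Y"
proof -
  let ?I = "idx_set d n"
  define Lt where "Lt = L2_set T ?I"
  define M where "M = root d (2 * Lt)"
  have Lt0: "Lt \<ge> 0" unfolding Lt_def by simp
  have M0: "M \<ge> 0" unfolding M_def using Lt0 by (simp add: real_root_ge_zero)
  define K where "K = PiE UNIV (\<lambda>_::nat\<times>nat\<times>nat. {0..M})"
  have cK: "compact K" unfolding K_def by (rule compact_PiE_UNIV) simp
  have zK: "(\<lambda>_. 0) \<in> K" unfolding K_def using M0 by auto
  define \<phi> where "\<phi> v = dd ?I T (tens d n r v)" for v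
  have \<phi>eq: "\<phi> = (\<lambda>v. sqrt (\<Sum>\<iota>\<in>?I. (T \<iota> - (\<Sum>p<r. \<Prod>i<d. v (p, i, \<iota> i)))\<^sup>2))"
    unfolding \<phi>_def dd_def L2_set_def tens_def by (intro ext arg_cong[where f=sqrt] sum.cong) auto
  have cphi: "continuous_on K \<phi>" unfolding \<phi>eq by (intro continuous_intros)
  obtain v0 where v0: "v0 \<in> K" "\<And>v. v \<in> K \<Longrightarrow> \<phi> v0 \<le> \<phi> v"
    using continuous_attains_inf[OF cK _ cphi] zK by blast
  have v0nn: "v0 x \<ge> 0" for x using v0(1) unfolding K_def by (cases x) (auto simp: PiE_def Pi_def)
  have phi0: "\<phi> (\<lambda>_. 0) = Lt"
    unfolding \<phi>eq Lt_def L2_set_def using d by (simp add: zero_power)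
  show ?thesis
  proof (intro bexI[of _ "tens d n r v0"] ballI)
    show "tens d n r v0 \<in> D_plus d n r" by (rule tens_in_D[OF v0nn])
    fix Y assume Y: "Y \<in> D_plus d n r"
    show "dd ?I T (tens d n r v0) \<le> dd ?I T Y"
    proof (cases "dd ?I T Y \<le> Lt")
      case True
      have "Y \<iota> \<le> 2 * Lt" if \<iota>: "\<iota> \<in> ?I" for \<iota>
      proof -
        have "Y \<iota> \<le> L2_set Y ?I" by (rule member_le_L2_set[OF finite_idx \<iota>])
        also have "L2_set Y ?I = L2_set (\<lambda>i. (Y i - T i) + T i) ?I" by simp
        also have "\<dots> \<le> dd ?I Y T + Lt" unfolding dd_def Lt_def by (rule L2_set_triangle_ineq)
        also have "\<dots> \<le> 2 * Lt" using True dd_sym[of ?I Y T] by simp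
        finally show ?thesis .
      qed
      then obtain v where v: "\<And>x. 0 \<le> v x \<and> v x \<le> M" "Y = tens d n r v"
        using D_decomp[OF d Y _ ] Lt0 unfolding M_def by (metis mult_nonneg_nonneg zero_le_numeral)
      have "v \<in> K" unfolding K_def using v(1) by auto
      then show ?thesis using v0(2) v(2) unfolding \<phi>_def by blast
    next
      case False
      then show ?thesis using v0(2)[OF zK] phi0 unfolding \<phi>_def by simp
    qed
  qed
qed

lemma idx0: "idx_set 0 n = {\<lambda>_. undefined}"
  unfolding idx_set_def by simp

lemma decomp0: "has_nn_decomp 0 n k X \<longleftrightarrow> X = restrict (\<lambda>_. real k) (idx_set 0 n)"
  unfolding has_nn_decomp_def by simp

lemma ts0: assumes "X \<in> tensor_space 0 n"
  shows "X = restrict (\<lambda>_. X (\<lambda>_. undefined)) (idx_set 0 n)"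
  using assms unfolding tensor_space_def idx0 by (intro PiE_ext[OF assms[unfolded tensor_space_def idx0]]) auto

lemma rank0_nat:
  assumes "X \<in> tensor_space 0 n" "X (\<lambda>_. undefined) = real k"
  shows "nn_rank 0 n X = k"
  unfolding nn_rank_def
proof (rule Least_equality)
  show "has_nn_decomp 0 n k X" unfolding decomp0 using ts0[OF assms(1)] assms(2) by simp
  fix m assume "has_nn_decomp 0 n m X"
  then have "X (\<lambda>_. undefined) = real m" unfolding decomp0 idx0 by simp
  then show "k \<le> m" using assms(2) by simp
qed

lemma rank0_notnat:
  assumes "\<forall>k::nat. X (\<lambda>_. undefined) \<noteq> real k"
  shows "nn_rank 0 n X = (LEAST k::nat. False)"
proof -
  have "(\<lambda>k. has_nn_decomp 0 n k X) = (\<lambda>k. False)"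
    using assms unfolding decomp0 idx0 by (auto simp: fun_eq_iff)
  then show ?thesis unfolding nn_rank_def by simp
qed

lemma finite_min:
  fixes f :: "'a \<Rightarrow> real"
  assumes "finite D" "D \<noteq> {}"
  shows "\<exists>X\<in>D. \<forall>Y\<in>D. f X \<le> f Y"
proof -
  have "Min (f ` D) \<in> f ` D" using assms by (intro Min_in) auto
  then obtain X where "X \<in> D" "f X = Min (f ` D)" by auto
  then show ?thesis using assms by (intro bexI[of _ X]) auto
qed

lemma Z0_in: "restrict (\<lambda>_. 0) (idx_set d n) \<in> D_plus d n r"
proof -
  have "has_nn_decomp d n 0 (restrict (\<lambda>_. 0) (idx_set d n))"
    unfolding has_nn_decomp_def by simp
  then have "nn_rank d n (restrict (\<lambda>_. 0) (idx_set d n)) \<le> 0" unfolding nn_rank_def by (rule Least_le)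
  then show ?thesis unfolding D_plus_def nonneg_tensors_def tensor_space_def by auto
qed

lemma exist_AE:
  "AE T in tensor_lebesgue d n. (T \<in> nonneg_tensors d n \<and> nn_rank d n T > r) \<longrightarrow>
     (\<exists>X\<in>D_plus d n r. \<forall>Y\<in>D_plus d n r. dd (idx_set d n) T X \<le> dd (idx_set d n) T Y)"
proof (cases "d \<ge> 1")
  case True
  then show ?thesis using exists_min[OF True] by (intro AE_I2) blast
next
  case False
  then have d0: "d = 0" by simp
  let ?i0 = "\<lambda>_::nat. undefined :: nat"
  let ?I = "idx_set 0 n"
  let ?c0 = "LEAST k::nat. False"
  show ?thesis
  proof (cases "?c0 \<le> r")
    case True
    interpret product_sigma_finite "\<lambda>_. lborel" by standard
    have null: "AE T in PiM ?I (\<lambda>_. lborel). T ?i0 \<noteq> real k" for k :: nat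
    proof (rule AE_I')
      let ?N = "PiE ?I (\<lambda>_. {real k})"
      have Ns: "?N \<in> sets (PiM ?I (\<lambda>_. lborel))"
        by (rule sets_PiM_I_finite) (auto simp: idx0)
      have "emeasure (PiM ?I (\<lambda>_. lborel)) ?N = (\<Prod>i\<in>?I. emeasure lborel {real k})"
        by (rule emeasure_PiM) (auto simp: idx0)
      also have "\<dots> = 0" by (simp add: idx0)
      finally show "?N \<in> null_sets (PiM ?I (\<lambda>_. lborel))" using Ns by auto
      show "{T \<in> space (PiM ?I (\<lambda>_. lborel)). \<not> T ?i0 \<noteq> real k} \<subseteq> ?N"
      proof
        fix T assume T: "T \<in> {T \<in> space (PiM ?I (\<lambda>_. lborel)). \<not> T ?i0 \<noteq> real k}"
        then have Tt: "T \<in> tensor_space 0 n" by (simp add: space_PiM tensor_space_def)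
        have "T = restrict (\<lambda>_. real k) ?I" using ts0[OF Tt] T by simp
        then show "T \<in> ?N" by simp
      qed
    qed
    have "AE T in PiM ?I (\<lambda>_. lborel). \<forall>k\<in>(UNIV::nat set). T ?i0 \<noteq> real k"
      by (subst AE_ball_countable) (auto intro: null)
    then show ?thesis unfolding d0 tensor_lebesgue_def
    proof (rule AE_mp, intro AE_I2 impI)
      fix T assume "\<forall>k\<in>(UNIV::nat set). T ?i0 \<noteq> real k"
        "T \<in> nonneg_tensors 0 n \<and> r < nn_rank 0 n T"
      then show "\<exists>X\<in>D_plus 0 n r. \<forall>Y\<in>D_plus 0 n r. dd ?I T X \<le> dd ?I T Y"
        using rank0_notnat[of T n] True by auto
    qed
  next
    case False
    have sub: "D_plus 0 n r \<subseteq> (\<lambda>k. restrict (\<lambda>_. real k) ?I) ` {..r}"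
    proof
      fix X assume X: "X \<in> D_plus 0 n r"
      then have Xt: "X \<in> tensor_space 0 n" and Xr: "nn_rank 0 n X \<le> r"
        by (auto simp: D_plus_def nonneg_tensors_def)
      show "X \<in> (\<lambda>k. restrict (\<lambda>_. real k) ?I) ` {..r}"
      proof (cases "\<exists>k::nat. X ?i0 = real k")
        case True
        then obtain k where k: "X ?i0 = real k" by blast
        have "k \<le> r" using rank0_nat[OF Xt k] Xr by simp
        moreover have "X = restrict (\<lambda>_. real k) ?I" using ts0[OF Xt] k by simp
        ultimately show ?thesis by auto
      next
        case nn: False
        then show ?thesis using rank0_notnat[of X n] Xr False by auto
      qed
    qed
    have fin: "finite (D_plus 0 n r)" by (rule finite_subset[OF sub]) auto
    have ne: "D_plus 0 n r \<noteq> {}" using Z0_in by blast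
    show ?thesis unfolding d0 using finite_min[OF fin ne] by (intro AE_I2) blast
  qed
qed

theorem mainTheorem1:
  fixes d r :: nat and n :: "nat \<Rightarrow> nat"
  assumes "r > 0"
  shows "AE T in tensor_lebesgue d n.
           (T \<in> nonneg_tensors d n \<and> nn_rank d n T > r) \<longrightarrow>
           (\<exists>!X. X \<in> D_plus d n r \<and>
                 (\<forall>Y \<in> D_plus d n r. hs_norm d n (T - X) \<le> hs_norm d n (T - Y)))"
proof -
  let ?I = "idx_set d n" and ?D = "D_plus d n r"
  have hs: "hs_norm d n (T - X) = dd ?I T X" for T X
    by (simp add: hs_norm_def dd_def L2_set_def)
  have ne: "?D \<noteq> {}" using Z0_in by blast
  have Dt: "X \<in> PiE ?I (\<lambda>_. UNIV)" if "X \<in> ?D" for X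
    using that by (auto simp: D_plus_def nonneg_tensors_def tensor_space_def)
  have U: "AE T in tensor_lebesgue d n. \<forall>X1\<in>?D. \<forall>X2\<in>?D.
     (\<forall>Y\<in>?D. dd ?I T X1 \<le> dd ?I T Y) \<longrightarrow> (\<forall>Y\<in>?D. dd ?I T X2 \<le> dd ?I T Y) \<longrightarrow> (\<forall>i\<in>?I. X1 i = X2 i)"
    unfolding tensor_lebesgue_def by (rule uniq_AE[OF finite_idx ne])
  have E: "AE T in tensor_lebesgue d n. (T \<in> nonneg_tensors d n \<and> nn_rank d n T > r) \<longrightarrow>
     (\<exists>X\<in>?D. \<forall>Y\<in>?D. dd ?I T X \<le> dd ?I T Y)"
    by (rule exist_AE)
  show ?thesis using U E
  proof eventually_elim
    case (elim T)
    show ?case unfolding hs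
    proof
      assume H: "T \<in> nonneg_tensors d n \<and> nn_rank d n T > r"
      then obtain X where X: "X \<in> ?D" "\<forall>Y\<in>?D. dd ?I T X \<le> dd ?I T Y" using elim(2) by blast
      show "\<exists>!X. X \<in> ?D \<and> (\<forall>Y\<in>?D. dd ?I T X \<le> dd ?I T Y)"
      proof (rule ex1I[of _ X])
        show "X \<in> ?D \<and> (\<forall>Y\<in>?D. dd ?I T X \<le> dd ?I T Y)" using X by blast
        fix Z assume Z: "Z \<in> ?D \<and> (\<forall>Y\<in>?D. dd ?I T Z \<le> dd ?I T Y)"
        have "\<forall>i\<in>?I. Z i = X i" using elim(1) Z X by blast
        moreover have "Z \<in> PiE ?I (\<lambda>_. UNIV)" "X \<in> PiE ?I (\<lambda>_. UNIV)" using Dt Z X by auto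
        ultimately show "Z = X" by (metis PiE_ext)
      qed
    qed
  qed
qed

end
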